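(* Let $I$ be a fuzzy implication function and $T$ a t-norm, and suppose $I$ satisfies the ordering property: $I(x,y)=1\iff x\le y$, for all $x,y\in[0,1]$. Then $I$ satisfies the monotonicity of the generalized modus ponens with respect to $T$ (i.e. $T(\tilde x,I(\tilde x,y))\le T(x,I(x,y))$ for all $x,\tilde x,y\in[0,1]$ with $\tilde x\le x$) if and only if, for every $y\in[0,1)$, the function $f_y:[y,1]\to[0,1]$, $f_y(x)=T(x,I(x,y))$, is increasing.
   Context: A fuzzy implication function is a map $I:[0,1]^2\to[0,1]$ decreasing in the first variable, increasing in the second, with $I(0,0)=I(1,1)=1$, $I(1,0)=0$. A t-norm is a commutative, associative binary operation on $[0,1]$, increasing in both variables, with neutral element $1$. "Increasing" means non-decreasing. *)

theory Defs
  imports Main "HOL.Real"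
begin


definition fuzzy_implication :: "(real \<Rightarrow> real \<Rightarrow> real) \<Rightarrow> bool" where
  "fuzzy_implication I \<longleftrightarrow>
     (\<forall>x\<in>{0..1}. \<forall>y\<in>{0..1}. I x y \<in> {0..1}) \<and>
     (\<forall>x1\<in>{0..1}. \<forall>x2\<in>{0..1}. \<forall>y\<in>{0..1}. x1 \<le> x2 \<longrightarrow> I x2 y \<le> I x1 y) \<and>
     (\<forall>x\<in>{0..1}. \<forall>y1\<in>{0..1}. \<forall>y2\<in>{0..1}. y1 \<le> y2 \<longrightarrow> I x y1 \<le> I x y2) \<and>
     I 0 0 = 1 \<and> I 1 1 = 1 \<and> I 1 0 = 0"

definition t_norm :: "(real \<Rightarrow> real \<Rightarrow> real) \<Rightarrow> bool" where
  "t_norm T \<longleftrightarrow>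
     (\<forall>x\<in>{0..1}. \<forall>y\<in>{0..1}. T x y \<in> {0..1}) \<and>
     (\<forall>x\<in>{0..1}. \<forall>y\<in>{0..1}. T x y = T y x) \<and>
     (\<forall>x\<in>{0..1}. \<forall>y\<in>{0..1}. \<forall>z\<in>{0..1}. T x (T y z) = T (T x y) z) \<and>
     (\<forall>x1\<in>{0..1}. \<forall>x2\<in>{0..1}. \<forall>y\<in>{0..1}. x1 \<le> x2 \<longrightarrow> T x1 y \<le> T x2 y) \<and>
     (\<forall>x\<in>{0..1}. T x 1 = x)"

definition ordering_property :: "(real \<Rightarrow> real \<Rightarrow> real) \<Rightarrow> bool" where
  "ordering_property I \<longleftrightarrow> (\<forall>x\<in>{0..1}. \<forall>y\<in>{0..1}. I x y = 1 \<longleftrightarrow> x \<le> y)"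

definition monotone_GMP :: "(real \<Rightarrow> real \<Rightarrow> real) \<Rightarrow> (real \<Rightarrow> real \<Rightarrow> real) \<Rightarrow> bool" where
  "monotone_GMP I T \<longleftrightarrow>
     (\<forall>x\<in>{0..1}. \<forall>xt\<in>{0..1}. \<forall>y\<in>{0..1}. xt \<le> x \<longrightarrow> T xt (I xt y) \<le> T x (I x y))"

end

theory Submission
  imports Defs
begin

theorem proposition10:
  fixes I T :: "real \<Rightarrow> real \<Rightarrow> real"
  assumes "fuzzy_implication I" and "t_norm T" and "ordering_property I"
  shows "monotone_GMP I T \<longleftrightarrow>
    (\<forall>y\<in>{0..<1}. mono_on {y..1} (\<lambda>x. T x (I x y)))"
proof
  assume m: "monotone_GMP I T"
  show "\<forall>y\<in>{0..<1}. mono_on {y..1} (\<lambda>x. T x (I x y))"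
  proof (intro ballI mono_onI)
    fix y r s :: real assume "y \<in> {0..<1}" "r \<in> {y..1}" "s \<in> {y..1}" "r \<le> s"
    then show "T r (I r y) \<le> T s (I s y)" using m unfolding monotone_GMP_def by auto
  qed
next
  assume h: "\<forall>y\<in>{0..<1}. mono_on {y..1} (\<lambda>x. T x (I x y))"
  have T1: "\<And>x. x \<in> {0..1} \<Longrightarrow> T x 1 = x" using assms(2) unfolding t_norm_def by auto
  have O: "\<And>x y. x \<in> {0..1} \<Longrightarrow> y \<in> {0..1} \<Longrightarrow> I x y = 1 \<longleftrightarrow> x \<le> y"
    using assms(3) unfolding ordering_property_def by auto
  show "monotone_GMP I T" unfolding monotone_GMP_def
  proof (intro ballI impI)
    fix x xt y assume x: "x \<in> {0..1::real}" and xt: "xt \<in> {0..1::real}" and y: "y \<in> {0..1::real}"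
      and le: "xt \<le> x"
    show "T xt (I xt y) \<le> T x (I x y)"
    proof (cases "y = 1")
      case True
      then show ?thesis using O[OF x y] O[OF xt y] T1[OF x] T1[OF xt] x xt le by auto
    next
      case False
      then have y1: "y \<in> {0..<1}" using y by auto
      have mo: "mono_on {y..1} (\<lambda>x. T x (I x y))" using h y1 by auto
      show ?thesis
      proof (cases "xt \<le> y")
        case True
        then have a: "T xt (I xt y) = xt" using O[OF xt y] T1[OF xt] by auto
        show ?thesis
        proof (cases "x \<le> y")
          case True
          then show ?thesis using a O[OF x y] T1[OF x] le by auto
        next
          case False
          have "T y (I y y) \<le> T x (I x y)"
            using mono_onD[OF mo, of y x] False x y by auto
          moreover have "T y (I y y) = y" using O[OF y y] T1[OF y] by auto
          ultimately show ?thesis using a True by auto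
        qed
      next
        case False
        then show ?thesis using mono_onD[OF mo, of xt x] x xt le by auto
      qed
    qed
  qed
qed

end
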